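(* Let $G$ be a second countable locally compact abelian group, $\varLambda\subseteq G$ uniformly discrete, $\mathcal{A}=(A_n)_n$ a van Hove sequence, and $F_n=\varLambda\cap A_n$. (a) If the density autocorrelation $\gamma_{\mathrm{dens}}$ of $\varLambda$ exists with respect to $\mathcal{A}$, then the density $\mathrm{dens}_{\mathcal{A}}(\varLambda)=\lim_n\frac{\mathrm{card}(F_n)}{\mathrm{vol}(A_n)}$ exists and $\gamma_{\mathrm{dens}}(\{0\})=\mathrm{dens}_{\mathcal{A}}(\varLambda)$. (b) If the counting autocorrelation $\gamma_{\mathrm{count}}$ exists with respect to $\mathcal{A}$, then the following are equivalent: (i) $\gamma_{\mathrm{count}}(\{0\})=1$; (ii) $(F_n)_n$ contains a subsequence of nonempty sets; (iii) there exists $N$ such that $F_n\ne\emptyset$ for all $n>N$; (iv) $\gamma_{\mathrm{count}}\ne0$.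
   Context: $\mathrm{vol}$ is Haar measure. Uniformly discrete: there is a nonempty open $U$ such that each $t+U$ meets $\varLambda$ in at most one point. A van Hove sequence is a sequence of compact sets $A_n$ of positive Haar measure with $\mathrm{vol}(\partial^K A_n)/\mathrm{vol}(A_n)\to0$ for all compact $K$, where $\partial^K A=((A+K)\setminus A^\circ)\cup((\overline{G\setminus A}-K)\cap A)$. For finite $F$, $\gamma_F=\frac{1}{\mathrm{card}(F)}\sum_{x,y\in F}\delta_{x-y}$ if $F\ne\emptyset$, $\gamma_\emptyset=0$; $\gamma_n=\frac{1}{\mathrm{vol}(A_n)}\sum_{x,y\in F_n}\delta_{x-y}$. The density (resp. counting) autocorrelation is the vague limit of $\gamma_n$ (resp. $\gamma_{F_n}$). *)

theory Defs
  imports "HOL-Analysis.Analysis"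
begin

definition is_haar_measure :: "'a::topological_ab_group_add measure \<Rightarrow> bool" where
  "is_haar_measure \<mu> \<longleftrightarrow>
     sets \<mu> = sets borel \<and>
     (\<forall>S\<in>sets borel. \<forall>t. emeasure \<mu> ((+) t ` S) = emeasure \<mu> S) \<and>
     (\<forall>K. compact K \<longrightarrow> emeasure \<mu> K < \<infinity>) \<and>
     (\<forall>U. open U \<and> U \<noteq> {} \<longrightarrow> emeasure \<mu> U > 0) \<and>
     (\<forall>S\<in>sets borel. emeasure \<mu> S = (INF U\<in>{U. open U \<and> S \<subseteq> U}. emeasure \<mu> U)) \<and>
     (\<forall>U. open U \<longrightarrow> emeasure \<mu> U = (SUP K\<in>{K. compact K \<and> K \<subseteq> U}. emeasure \<mu> K))"

definition radon_measure :: "'a::topological_space measure \<Rightarrow> bool" where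
  "radon_measure \<mu> \<longleftrightarrow> sets \<mu> = sets borel \<and> (\<forall>K. compact K \<longrightarrow> emeasure \<mu> K < \<infinity>)"

definition uniformly_discrete :: "'a::{topological_space, plus} set \<Rightarrow> bool" where
  "uniformly_discrete L \<longleftrightarrow>
     (\<exists>U. open U \<and> U \<noteq> {} \<and>
        (\<forall>t. \<forall>x\<in>L \<inter> ((+) t ` U). \<forall>y\<in>L \<inter> ((+) t ` U). x = y))"

definition van_hove_boundary :: "'a::{topological_space, ab_group_add} set \<Rightarrow> 'a set \<Rightarrow> 'a set" where
  "van_hove_boundary K A =
     ({a + k | a k. a \<in> A \<and> k \<in> K} - interior A) \<union>
     ({x - k | x k. x \<in> closure (UNIV - A) \<and> k \<in> K} \<inter> A)"

definition van_hove :: "'a::{topological_space, ab_group_add} measure \<Rightarrow> (nat \<Rightarrow> 'a set) \<Rightarrow> bool" where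
  "van_hove vol A \<longleftrightarrow>
     (\<forall>n. compact (A n) \<and> emeasure vol (A n) > 0) \<and>
     (\<forall>K. compact K \<longrightarrow>
        (\<lambda>n. measure vol (van_hove_boundary K (A n)) / measure vol (A n)) \<longlonglongrightarrow> 0)"

text \<open>The measure  c * sum_{x,y in F} delta_{x-y}  on the Borel sets.\<close>
definition diff_dirac_sum :: "real \<Rightarrow> 'a::{topological_space, ab_group_add} set \<Rightarrow> 'a measure" where
  "diff_dirac_sum c F = measure_of UNIV (sets borel)
     (\<lambda>S. ennreal (c * real (card {(x, y). x \<in> F \<and> y \<in> F \<and> x - y \<in> S})))"

definition gamma_count :: "'a::{topological_space, ab_group_add} set \<Rightarrow> 'a measure" where
  "gamma_count F = (if F = {} then null_measure borel else diff_dirac_sum (1 / real (card F)) F)"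

definition gamma_dens :: "'a::{topological_space, ab_group_add} measure \<Rightarrow> 'a set \<Rightarrow> 'a set \<Rightarrow> 'a measure" where
  "gamma_dens vol A F = diff_dirac_sum (1 / measure vol A) F"

definition vague_converges :: "(nat \<Rightarrow> 'a::topological_space measure) \<Rightarrow> 'a measure \<Rightarrow> bool" where
  "vague_converges \<mu>s \<mu> \<longleftrightarrow>
     (\<forall>f :: 'a \<Rightarrow> complex. continuous_on UNIV f \<and> compact (closure {x. f x \<noteq> 0}) \<longrightarrow>
        (\<lambda>n. integral\<^sup>L (\<mu>s n) f) \<longlonglongrightarrow> integral\<^sup>L \<mu> f)"

end

theory Submission
  imports Defs "HOL-Analysis.Analysis"
begin


lemma compact_closed_sub:
  assumes "compact T" "closed S" "S \<subseteq> T"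
  shows "compact S"
proof -
  have "compact (S \<inter> T)" using closed_Int_compact[OF assms(2,1)] .
  moreover have "S \<inter> T = S" using assms(3) by blast
  ultimately show ?thesis by simp
qed

lemma hausdorff_eucl: "Hausdorff_space (euclidean :: 'a::t2_space topology)"
  unfolding Hausdorff_space_def disjnt_def
proof (intro allI impI)
  fix x y :: 'a assume "x \<in> topspace euclidean \<and> y \<in> topspace euclidean \<and> x \<noteq> y"
  then have "x \<noteq> y" by blast
  from hausdorff[OF this] obtain U V where "open U" "open V" "x \<in> U" "y \<in> V" "U \<inter> V = {}"
    by blast
  then show "\<exists>U V. openin euclidean U \<and> openin euclidean V \<and> x \<in> U \<and> y \<in> V \<and> U \<inter> V = {}"
    by auto
qed

lemma urysohn_cc:
  fixes K W :: "'a::t2_space set"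
  assumes lc: "locally_compact_space (euclidean :: 'a topology)"
    and K: "compact K" and W: "open W" and KW: "K \<subseteq> W"
  shows "\<exists>g::'a\<Rightarrow>real. continuous_on UNIV g \<and> (\<forall>x. 0 \<le> g x \<and> g x \<le> 1) \<and> (\<forall>x\<in>K. g x = 1)
          \<and> {x. g x \<noteq> 0} \<subseteq> W \<and> compact (closure {x. g x \<noteq> 0})"
proof -
  have H: "Hausdorff_space (euclidean :: 'a topology)" by (rule hausdorff_eucl)
  have reg: "regular_space (euclidean :: 'a topology)"
    using locally_compact_Hausdorff_imp_regular_space[OF lc H] .
  have cr: "completely_regular_space (euclidean :: 'a topology)"
    using completely_regular_eq_regular_space[OF lc] reg by blast
  have "\<forall>K. compactin euclidean K \<longrightarrow> (\<exists>U L. openin euclidean U \<and> compactin euclidean L \<and> closedin euclidean L \<and> K \<subseteq> U \<and> U \<subseteq> (L::'a set))"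
    using locally_compact_space_compact_closed_compact[of "euclidean :: 'a topology"] H lc by blast
  then obtain U C where "openin euclidean U" "compactin euclidean C" "closedin euclidean C" "K \<subseteq> U" "U \<subseteq> (C::'a set)"
    using K by auto
  then have U: "open U" and C: "compact C" "closed C" and KU: "K \<subseteq> U" and UC: "U \<subseteq> C"
    by simp_all
  have "closed (- (U \<inter> W))" by (rule closed_Compl) (rule open_Int[OF U W])
  then have T: "closedin euclidean (- (U \<inter> W))" by simp
  have dj: "disjnt K (- (U \<inter> W))" using KU KW by (auto simp: disjnt_def)
  obtain f where cf: "continuous_map euclidean (subtopology euclidean {0..1::real}) f"
      and f0: "f ` (- (U \<inter> W)) \<subseteq> {0}" and f1: "f ` K \<subseteq> {1}"
    using Urysohn_completely_regular_compact_closed[of 0 1 euclidean K "- (U \<inter> W)"] cr K T dj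
    by auto
  have cont: "continuous_on UNIV f" and rng: "\<forall>x. 0 \<le> f x \<and> f x \<le> 1"
    using cf by (auto simp: continuous_map_in_subtopology)
  have sub: "{x. f x \<noteq> 0} \<subseteq> U \<inter> W" using f0 by auto
  have "closure {x. f x \<noteq> 0} \<subseteq> C"
    using sub UC C(2) by (meson closure_minimal inf.boundedE subset_trans)
  then have "compact (closure {x. f x \<noteq> 0})"
    using compact_closed_sub[OF C(1) closed_closure] by blast
  then show ?thesis using cont rng f1 sub by blast
qed



lemma sigma_compact_cover:
  assumes lc: "locally_compact_space (euclidean :: 'a::{t2_space,second_countable_topology} topology)"
  shows "\<exists>CC::'a set set. countable CC \<and> \<Union>CC = UNIV \<and> (\<forall>c\<in>CC. compact c)"
proof -
  define FF where "FF = {U::'a set. open U \<and> compact (closure U)}"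
  have cov: "\<Union>FF = UNIV"
  proof (rule set_eqI, rule iffI)
    fix x :: 'a
    have "\<exists>U K. openin euclidean U \<and> compactin euclidean K \<and> x \<in> U \<and> U \<subseteq> K"
      using lc[unfolded locally_compact_space_def, rule_format, of x] by simp
    then obtain U K where "open U" "compact K" "x \<in> U" "U \<subseteq> K" by auto
    moreover have "closure U \<subseteq> K" using \<open>compact K\<close> \<open>U \<subseteq> K\<close>
      by (simp add: closure_minimal compact_imp_closed)
    ultimately have "compact (closure U)"
      using compact_closed_sub[OF \<open>compact K\<close> closed_closure] by blast
    then show "x \<in> \<Union>FF" using \<open>open U\<close> \<open>x \<in> U\<close> unfolding FF_def by blast
  qed simp
  have "\<And>S. S \<in> FF \<Longrightarrow> openin (top_of_set UNIV) S" unfolding FF_def by simp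
  then obtain FF' where FF': "FF' \<subseteq> FF" "countable FF'" "\<Union>FF' = \<Union>FF"
    using Lindelof_openin[of FF UNIV] by metis
  have c1: "countable (closure ` FF')" using FF'(2) by simp
  have c2: "\<Union>(closure ` FF') = UNIV"
  proof (rule set_eqI, rule iffI)
    fix x :: 'a
    have "x \<in> \<Union>FF'" using FF'(3) cov by simp
    then obtain V where "V \<in> FF'" "x \<in> V" by blast
    moreover have "x \<in> closure V" using \<open>x \<in> V\<close> closure_subset by blast
    ultimately show "x \<in> \<Union>(closure ` FF')" by blast
  qed simp
  have c3: "\<forall>c\<in>closure ` FF'. compact c" using FF'(1) unfolding FF_def by blast
  show ?thesis using c1 c2 c3 by blast
qed

lemma ud_finite:
  assumes ud: "uniformly_discrete (L::'a::topological_ab_group_add set)" and A: "compact A"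
  shows "finite (L \<inter> A)"
proof -
  obtain U where U: "open U" "U \<noteq> {}" and sep: "\<And>t x y. x \<in> L \<inter> ((+) t ` U) \<Longrightarrow> y \<in> L \<inter> ((+) t ` U) \<Longrightarrow> x = y"
    using ud unfolding uniformly_discrete_def by blast
  obtain u0 where u0: "u0 \<in> U" using U by auto
  define V where "V = (\<lambda>a. (\<lambda>x. x - (a - u0)) -` U)"
  have oV: "open (V a)" for a
    unfolding V_def
    by (rule open_vimage[OF U(1)]) (intro continuous_intros)
  have "A \<subseteq> \<Union>(V ` A)" unfolding V_def using u0 by auto
  then obtain T where T: "T \<subseteq> A" "finite T" "A \<subseteq> \<Union>(V ` T)"
    using compactE_image[OF A, of A V] oV by metis
  have VU: "V a = (+) (a - u0) ` U" for a
  proof (rule set_eqI)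
    fix x show "x \<in> V a \<longleftrightarrow> x \<in> (+) (a - u0) ` U"
    proof
      assume "x \<in> V a" then have "x - (a - u0) \<in> U" by (simp add: V_def)
      then show "x \<in> (+) (a - u0) ` U" by (rule image_eqI[rotated]) simp
    next
      assume "x \<in> (+) (a - u0) ` U"
      then obtain u where "u \<in> U" "x = (a - u0) + u" by auto
      then show "x \<in> V a" by (simp add: V_def)
    qed
  qed
  have fin: "finite (L \<inter> V a)" for a
  proof (cases "L \<inter> V a = {}")
    case False
    then obtain z where z: "z \<in> L \<inter> V a" by auto
    have "L \<inter> V a \<subseteq> {z}"
    proof
      fix y assume y: "y \<in> L \<inter> V a"
      have "y \<in> L \<inter> (+) (a - u0) ` U" "z \<in> L \<inter> (+) (a - u0) ` U"
        using y z VU[of a] by blast+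
      then have "y = z" by (rule sep)
      then show "y \<in> {z}" by simp
    qed
    then show ?thesis using finite_subset by blast
  qed simp
  have "L \<inter> A \<subseteq> (\<Union>a\<in>T. L \<inter> V a)" using T(3) by auto
  moreover have "finite (\<Union>a\<in>T. L \<inter> V a)" by (rule finite_UN_I[OF T(2)]) (rule fin)
  ultimately show ?thesis using finite_subset by blast
qed



lemma dds_eq:
  fixes F :: "'a::topological_ab_group_add set"
  assumes fin: "finite F" and c: "c \<ge> 0"
  shows "diff_dirac_sum c F = distr (density (count_space (F \<times> F)) (\<lambda>_. ennreal c)) borel (\<lambda>p. fst p - snd p)"
    (is "_ = ?N")
proof -
  have meas: "(\<lambda>p. fst p - snd p) \<in> measurable (density (count_space (F \<times> F)) (\<lambda>_. ennreal c)) borel"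
    by (simp add: measurable_count_space_eq1 cong: measurable_cong_sets)
  have "?N = measure_of UNIV (sets borel) (emeasure ?N)"
    using measure_of_of_measure[of ?N] by simp
  also have "\<dots> = diff_dirac_sum c F" unfolding diff_dirac_sum_def
  proof (rule measure_of_eq)
    fix a assume "a \<in> sigma_sets UNIV (sets (borel :: 'a measure))"
    then have a: "a \<in> sets borel" using sets.sigma_sets_eq[of "borel :: 'a measure"] by simp
    define S where "S = (\<lambda>p. fst p - snd p) -` a \<inter> (F \<times> F)"
    have S_eq: "S = {(x, y). x \<in> F \<and> y \<in> F \<and> x - y \<in> a}" unfolding S_def by auto
    have finS: "finite S" unfolding S_def using fin by auto
    have "emeasure ?N a = emeasure (density (count_space (F \<times> F)) (\<lambda>_. ennreal c)) S"
      unfolding S_def using emeasure_distr[OF meas, of a] a by simp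
    also have "\<dots> = (\<integral>\<^sup>+ x. ennreal c * indicator S x \<partial>count_space (F \<times> F))"
      by (rule emeasure_density) (auto simp: S_def)
    also have "\<dots> = ennreal c * emeasure (count_space (F \<times> F)) S"
      by (rule nn_integral_cmult_indicator) (auto simp: S_def)
    also have "\<dots> = ennreal c * of_nat (card S)"
      using finS by (subst emeasure_count_space_finite) (auto simp: S_def)
    also have "\<dots> = ennreal (c * real (card S))"
      using c by (simp add: ennreal_mult ennreal_of_nat_eq_real_of_nat)
    finally show "emeasure ?N a = ennreal (c * real (card {(x, y). x \<in> F \<and> y \<in> F \<and> x - y \<in> a}))"
      unfolding S_eq .
  qed simp
  finally show ?thesis by simp
qed

lemma dds_integral:
  fixes F :: "'a::topological_ab_group_add set"
    and f :: "'a \<Rightarrow> 'b::{banach, second_countable_topology}"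
  assumes fin: "finite F" and c: "c \<ge> 0" and f: "f \<in> borel_measurable borel"
  shows "integral\<^sup>L (diff_dirac_sum c F) f = (\<Sum>p\<in>F \<times> F. c *\<^sub>R f (fst p - snd p))"
proof -
  have meas: "(\<lambda>p. fst p - snd p) \<in> measurable (density (count_space (F \<times> F)) (\<lambda>_. ennreal c)) borel"
    by (simp add: measurable_count_space_eq1 cong: measurable_cong_sets)
  have "integral\<^sup>L (diff_dirac_sum c F) f
      = integral\<^sup>L (density (count_space (F \<times> F)) (\<lambda>_. ennreal c)) (\<lambda>p. f (fst p - snd p))"
    unfolding dds_eq[OF fin c] by (rule integral_distr[OF meas f])
  also have "\<dots> = integral\<^sup>L (count_space (F \<times> F)) (\<lambda>p. c *\<^sub>R f (fst p - snd p))"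
    by (rule integral_density) (use c in auto)
  also have "\<dots> = (\<Sum>p\<in>F \<times> F. c *\<^sub>R f (fst p - snd p))"
    using fin by (simp add: lebesgue_integral_count_space_finite scaleR_sum_right)
  finally show ?thesis .
qed



lemma ud_nbhd:
  assumes ud: "uniformly_discrete (L::'a::topological_ab_group_add set)"
  shows "\<exists>W0. open W0 \<and> 0 \<in> W0 \<and> (\<forall>x\<in>L. \<forall>y\<in>L. x - y \<in> W0 \<longrightarrow> x = y)"
proof -
  obtain U where U: "open U" "U \<noteq> {}" and sep: "\<And>t x y. x \<in> L \<inter> ((+) t ` U) \<Longrightarrow> y \<in> L \<inter> ((+) t ` U) \<Longrightarrow> x = y"
    using ud unfolding uniformly_discrete_def by blast
  obtain u0 where u0: "u0 \<in> U" using U by auto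
  define W0 where "W0 = (\<lambda>x. x + u0) -` U"
  have "open W0" unfolding W0_def
    by (rule open_vimage[OF U(1)]) (intro continuous_intros)
  moreover have "0 \<in> W0" using u0 by (simp add: W0_def)
  moreover have "x = y" if "x \<in> L" "y \<in> L" "x - y \<in> W0" for x y
  proof -
    have "x - y + u0 \<in> U" using that(3) by (simp add: W0_def)
    then have "x \<in> (+) (y - u0) ` U" by (rule rev_image_eqI) (simp add: algebra_simps)
    moreover have "y \<in> (+) (y - u0) ` U" using u0 by (rule rev_image_eqI) simp
    ultimately show "x = y" using sep[of x "y - u0" y] that by blast
  qed
  ultimately show ?thesis by blast
qed

lemma test_eval:
  fixes g :: "'a::topological_ab_group_add \<Rightarrow> real"
  assumes fin: "finite F" and FL: "F \<subseteq> L" and c: "c \<ge> 0"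
    and disc: "\<forall>x\<in>L. \<forall>y\<in>L. x - y \<in> W0 \<longrightarrow> x = y"
    and g0: "g 0 = 1" and sub: "{x. g x \<noteq> 0} \<subseteq> W0" and cont: "continuous_on UNIV g"
  shows "integral\<^sup>L (diff_dirac_sum c F) (\<lambda>x. complex_of_real (g x)) = complex_of_real (c * real (card F))"
proof -
  have meas: "(\<lambda>x. complex_of_real (g x)) \<in> borel_measurable borel"
    by (rule borel_measurable_continuous_onI) (simp add: cont)
  have inner: "(\<Sum>y\<in>F. c *\<^sub>R complex_of_real (g (x - y))) = complex_of_real c" if x: "x \<in> F" for x
  proof -
    have "(\<Sum>y\<in>F. c *\<^sub>R complex_of_real (g (x - y))) = (\<Sum>y\<in>F. if y = x then complex_of_real c else 0)"
    proof (rule sum.cong)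
      fix y assume y: "y \<in> F"
      show "c *\<^sub>R complex_of_real (g (x - y)) = (if y = x then complex_of_real c else 0)"
      proof (cases "y = x")
        case False
        then have "x - y \<notin> W0" using disc x y FL by blast
        then have "g (x - y) = 0" using sub by blast
        then show ?thesis using False by simp
      qed (simp add: g0 scaleR_conv_of_real)
    qed simp
    also have "\<dots> = complex_of_real c" using x fin by (simp add: sum.delta')
    finally show ?thesis .
  qed
  have "(\<Sum>p\<in>F \<times> F. c *\<^sub>R complex_of_real (g (fst p - snd p)))
      = (\<Sum>(x, y)\<in>F \<times> F. c *\<^sub>R complex_of_real (g (x - y)))"
    by (simp add: case_prod_beta')
  also have "\<dots> = (\<Sum>x\<in>F. \<Sum>y\<in>F. c *\<^sub>R complex_of_real (g (x - y)))"
    by (rule sum.cartesian_product[symmetric])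
  also have "\<dots> = (\<Sum>x\<in>F. complex_of_real c)" by (rule sum.cong) (simp_all add: inner)
  also have "\<dots> = complex_of_real (c * real (card F))" by (simp add: mult.commute)
  finally show ?thesis using dds_integral[OF fin c meas] by simp
qed

lemma shrink_seq:
  fixes W0 :: "'a::{topological_ab_group_add, t2_space, second_countable_topology} set"
  assumes lc: "locally_compact_space (euclidean :: 'a topology)" and W0: "open W0" "0 \<in> W0"
  shows "\<exists>gs K0. compact K0 \<and>
     (\<forall>k. continuous_on UNIV (gs k) \<and> (\<forall>x. 0 \<le> gs k x \<and> gs k x \<le> (1::real)) \<and> gs k 0 = 1 \<and>
          {x. gs k x \<noteq> 0} \<subseteq> W0 \<inter> K0 \<and> compact (closure {x. gs k x \<noteq> 0})) \<and>
     (\<forall>x. (\<lambda>k. gs k x) \<longlonglongrightarrow> indicator {0} x)"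
proof -
  have "\<exists>U K. openin euclidean U \<and> compactin euclidean K \<and> (0::'a) \<in> U \<and> U \<subseteq> K"
    using lc[unfolded locally_compact_space_def, rule_format, of 0] by simp
  then obtain U K0 where U: "open U" "compact K0" "(0::'a) \<in> U" "U \<subseteq> K0" by auto
  obtain A :: "nat \<Rightarrow> 'a set" where A: "\<And>i. open (A i)" "\<And>i. 0 \<in> A i"
    "\<And>S. open S \<Longrightarrow> 0 \<in> S \<Longrightarrow> eventually (\<lambda>i. A i \<subseteq> S) sequentially"
    using countable_basis_at_decseq[of 0] by metis
  have "\<forall>k. \<exists>g::'a\<Rightarrow>real. continuous_on UNIV g \<and> (\<forall>x. 0 \<le> g x \<and> g x \<le> 1) \<and> (\<forall>x\<in>{0}. g x = 1)
          \<and> {x. g x \<noteq> 0} \<subseteq> A k \<inter> W0 \<inter> U \<and> compact (closure {x. g x \<noteq> 0})"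
  proof
    fix k
    show "\<exists>g::'a\<Rightarrow>real. continuous_on UNIV g \<and> (\<forall>x. 0 \<le> g x \<and> g x \<le> 1) \<and> (\<forall>x\<in>{0}. g x = 1)
          \<and> {x. g x \<noteq> 0} \<subseteq> A k \<inter> W0 \<inter> U \<and> compact (closure {x. g x \<noteq> 0})"
      by (rule urysohn_cc[OF lc]) (use A(1,2) W0 U in auto)
  qed
  then have "\<exists>gs. \<forall>k. continuous_on UNIV (gs k) \<and> (\<forall>x. 0 \<le> gs k x \<and> gs k x \<le> (1::real)) \<and> (\<forall>x\<in>{0::'a}. gs k x = 1)
          \<and> {x. gs k x \<noteq> 0} \<subseteq> A k \<inter> W0 \<inter> U \<and> compact (closure {x. gs k x \<noteq> 0})"
    by (rule choice)
  then obtain gs :: "nat \<Rightarrow> 'a \<Rightarrow> real" where gs0: "\<forall>k. continuous_on UNIV (gs k) \<and> (\<forall>x. 0 \<le> gs k x \<and> gs k x \<le> 1) \<and> (\<forall>x\<in>{0}. gs k x = 1)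
          \<and> {x. gs k x \<noteq> 0} \<subseteq> A k \<inter> W0 \<inter> U \<and> compact (closure {x. gs k x \<noteq> 0})"
    by blast
  note gs = gs0[rule_format]
  have conv: "(\<lambda>k. gs k x) \<longlonglongrightarrow> indicator {0} x" for x
  proof (cases "x = 0")
    case True
    then show ?thesis using gs by simp
  next
    case False
    have "open (- {x})" by (simp add: open_Compl)
    moreover have "0 \<in> - {x}" using False by auto
    ultimately have ev: "eventually (\<lambda>i. A i \<subseteq> - {x}) sequentially" by (rule A(3))
    have "eventually (\<lambda>i. gs i x = indicator {0} x) sequentially"
    proof (rule eventually_mono[OF ev])
      fix i assume "A i \<subseteq> - {x}"
      then have "x \<notin> A i" by auto
      then have "gs i x = 0" using gs[of i] by blast
      then show "gs i x = indicator {0} x" using False by simp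
    qed
    then show ?thesis by (rule tendsto_eventually)
  qed
  show ?thesis
    apply (rule exI[of _ gs], rule exI[of _ K0])
    using gs U conv by blast
qed

lemma dom_conv:
  fixes \<gamma> :: "'a::{topological_ab_group_add, t2_space, second_countable_topology} measure"
  assumes rad: "radon_measure \<gamma>" and K0: "compact K0"
    and gs: "\<And>k. continuous_on UNIV (gs k) \<and> (\<forall>x. 0 \<le> gs k x \<and> gs k x \<le> (1::real)) \<and> {x. gs k x \<noteq> 0} \<subseteq> K0"
    and conv: "\<And>x. (\<lambda>k. gs k x) \<longlonglongrightarrow> indicator {0} x"
  shows "(\<lambda>k. integral\<^sup>L \<gamma> (gs k)) \<longlonglongrightarrow> measure \<gamma> {0}"
proof -
  have sets: "sets \<gamma> = sets borel" and fin: "\<And>K. compact K \<Longrightarrow> emeasure \<gamma> K < \<infinity>"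
    using rad unfolding radon_measure_def by auto
  have sp: "space \<gamma> = UNIV" using sets_eq_imp_space_eq[OF sets] by simp
  have K0b: "K0 \<in> sets \<gamma>" using K0 sets by (simp add: compact_imp_closed borel_closed)
  have "(\<lambda>k. integral\<^sup>L \<gamma> (gs k)) \<longlonglongrightarrow> integral\<^sup>L \<gamma> (indicator {0} :: 'a \<Rightarrow> real)"
  proof (rule integral_dominated_convergence[where w="indicator K0"])
    show "(indicator {0} :: 'a \<Rightarrow> real) \<in> borel_measurable \<gamma>"
      using sets by (simp add: measurable_cong_sets[OF sets refl] borel_measurable_indicator_iff sp)
    show "gs k \<in> borel_measurable \<gamma>" for k
      using gs[of k] by (simp add: measurable_cong_sets[OF sets refl] borel_measurable_continuous_onI)
    show "integrable \<gamma> (indicator K0 :: 'a \<Rightarrow> real)"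
      using K0b fin[OF K0] by (simp add: integrable_indicator_iff sp)
    show "AE x in \<gamma>. (\<lambda>k. gs k x) \<longlonglongrightarrow> indicator {0} x" using conv by simp
    show "AE x in \<gamma>. norm (gs k x) \<le> indicator K0 x" for k
    proof (rule AE_I2)
      fix x
      show "norm (gs k x) \<le> indicator K0 x"
      proof (cases "gs k x = 0")
        case False
        then have "x \<in> K0" using gs[of k] by blast
        then show ?thesis using gs[of k] by simp
      qed simp
    qed
  qed
  also have "integral\<^sup>L \<gamma> (indicator {0} :: 'a \<Rightarrow> real) = measure \<gamma> {0}" by (simp add: sp)
  finally show ?thesis .
qed



theorem lemma3p8:
  fixes vol :: "'a::{topological_ab_group_add, t2_space, second_countable_topology} measure"
    and L :: "'a set"
    and A :: "nat \<Rightarrow> 'a set"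
  assumes lc: "locally_compact_space (euclidean :: 'a topology)"
    and haar: "is_haar_measure vol"
    and ud: "uniformly_discrete L"
    and vh: "van_hove vol A"
  shows
    "(\<forall>\<gamma>. radon_measure \<gamma> \<and> vague_converges (\<lambda>n. gamma_dens vol (A n) (L \<inter> A n)) \<gamma> \<longrightarrow>
        (\<exists>d. (\<lambda>n. real (card (L \<inter> A n)) / measure vol (A n)) \<longlonglongrightarrow> d \<and>
             measure \<gamma> {0} = d))
   \<and>
    (\<forall>\<gamma>. radon_measure \<gamma> \<and> vague_converges (\<lambda>n. gamma_count (L \<inter> A n)) \<gamma> \<longrightarrow>
        ((measure \<gamma> {0} = 1 \<longleftrightarrow> (\<exists>r::nat \<Rightarrow> nat. strict_mono r \<and> (\<forall>k. L \<inter> A (r k) \<noteq> {}))) \<and>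
         ((\<exists>r::nat \<Rightarrow> nat. strict_mono r \<and> (\<forall>k. L \<inter> A (r k) \<noteq> {})) \<longleftrightarrow> (\<exists>N. \<forall>n>N. L \<inter> A n \<noteq> {})) \<and>
         ((\<exists>N. \<forall>n>N. L \<inter> A n \<noteq> {}) \<longleftrightarrow> (\<exists>S\<in>sets borel. emeasure \<gamma> S \<noteq> 0))))"
proof -
  obtain W0 where W0: "open W0" "0 \<in> W0" and disc: "\<forall>x\<in>L. \<forall>y\<in>L. x - y \<in> W0 \<longrightarrow> x = y"
    using ud_nbhd[OF ud] by blast
  obtain gs K0 where K0: "compact K0"
    and gsP: "\<And>k. continuous_on UNIV (gs k) \<and> (\<forall>x. 0 \<le> gs k x \<and> gs k x \<le> (1::real)) \<and> gs k 0 = 1 \<and>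
          {x. gs k x \<noteq> 0} \<subseteq> W0 \<inter> K0 \<and> compact (closure {x. gs k x \<noteq> 0})"
    and gsconv: "\<And>x. (\<lambda>k. gs k x) \<longlonglongrightarrow> indicator {0} x"
    using shrink_seq[OF lc W0] by blast
  define f where "f k = (\<lambda>x. complex_of_real (gs k x))" for k
  have adm: "continuous_on UNIV (f k) \<and> compact (closure {x. f k x \<noteq> 0})" for k
    using gsP[of k] by (simp add: f_def)
  have finF: "finite (L \<inter> A n)" for n
    using vh ud_finite[OF ud] unfolding van_hove_def by blast
  have key: "s \<longlonglongrightarrow> measure \<gamma> {0}"
    if rad: "radon_measure \<gamma>" and lim: "\<And>k. (\<lambda>n. complex_of_real (s n)) \<longlonglongrightarrow> integral\<^sup>L \<gamma> (f k)"
    for \<gamma> :: "'a measure" and s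
  proof -
    have sk: "s \<longlonglongrightarrow> integral\<^sup>L \<gamma> (gs k)" for k
      using lim[of k] unfolding f_def integral_complex_of_real tendsto_of_real_iff .
    have eq: "integral\<^sup>L \<gamma> (gs k) = integral\<^sup>L \<gamma> (gs 0)" for k
      using LIMSEQ_unique[OF sk[of k] sk[of 0]] .
    have "(\<lambda>k. integral\<^sup>L \<gamma> (gs k)) \<longlonglongrightarrow> measure \<gamma> {0}"
    proof (rule dom_conv[OF rad K0])
      fix k show "continuous_on UNIV (gs k) \<and> (\<forall>x. 0 \<le> gs k x \<and> gs k x \<le> 1) \<and> {x. gs k x \<noteq> 0} \<subseteq> K0"
        using gsP[of k] by auto
    next
      fix x show "(\<lambda>k. gs k x) \<longlonglongrightarrow> indicator {0} x" by (rule gsconv)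
    qed
    moreover have "(\<lambda>k. integral\<^sup>L \<gamma> (gs k)) = (\<lambda>k. integral\<^sup>L \<gamma> (gs 0))"
      by (intro ext eq)
    ultimately have "(\<lambda>k. integral\<^sup>L \<gamma> (gs 0)) \<longlonglongrightarrow> measure \<gamma> {0}" by simp
    then have "integral\<^sup>L \<gamma> (gs 0) = measure \<gamma> {0}" using LIMSEQ_unique tendsto_const by blast
    then show ?thesis using sk[of 0] by simp
  qed
  have partA: "\<exists>d. (\<lambda>n. real (card (L \<inter> A n)) / measure vol (A n)) \<longlonglongrightarrow> d \<and> measure \<gamma> {0} = d"
    if rad: "radon_measure \<gamma>" and vc: "vague_converges (\<lambda>n. gamma_dens vol (A n) (L \<inter> A n)) \<gamma>" for \<gamma>
  proof -
    have ev: "integral\<^sup>L (gamma_dens vol (A n) (L \<inter> A n)) (f k)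
        = complex_of_real (real (card (L \<inter> A n)) / measure vol (A n))" for n k
    proof -
      have "integral\<^sup>L (gamma_dens vol (A n) (L \<inter> A n)) (f k)
          = complex_of_real (1 / measure vol (A n) * real (card (L \<inter> A n)))"
        unfolding gamma_dens_def f_def
        by (rule test_eval[OF finF _ _ disc]) (use gsP[of k] in auto)
      then show ?thesis by simp
    qed
    have "(\<lambda>n. real (card (L \<inter> A n)) / measure vol (A n)) \<longlonglongrightarrow> measure \<gamma> {0}"
    proof (rule key[OF rad])
      fix k
      have "(\<lambda>n. integral\<^sup>L (gamma_dens vol (A n) (L \<inter> A n)) (f k)) \<longlonglongrightarrow> integral\<^sup>L \<gamma> (f k)"
        using vc[unfolded vague_converges_def, rule_format, OF adm[of k]] .
      then show "(\<lambda>n. complex_of_real (real (card (L \<inter> A n)) / measure vol (A n))) \<longlonglongrightarrow> integral\<^sup>L \<gamma> (f k)"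
        unfolding ev .
    qed
    then show ?thesis by blast
  qed
  have partB: "(measure \<gamma> {0} = 1 \<longleftrightarrow> (\<exists>r::nat \<Rightarrow> nat. strict_mono r \<and> (\<forall>k. L \<inter> A (r k) \<noteq> {}))) \<and>
         ((\<exists>r::nat \<Rightarrow> nat. strict_mono r \<and> (\<forall>k. L \<inter> A (r k) \<noteq> {})) \<longleftrightarrow> (\<exists>N. \<forall>n>N. L \<inter> A n \<noteq> {})) \<and>
         ((\<exists>N. \<forall>n>N. L \<inter> A n \<noteq> {}) \<longleftrightarrow> (\<exists>S\<in>sets borel. emeasure \<gamma> S \<noteq> 0))"
    if rad: "radon_measure \<gamma>" and vc: "vague_converges (\<lambda>n. gamma_count (L \<inter> A n)) \<gamma>" for \<gamma>
  proof -
    have sets: "sets \<gamma> = sets borel" and finc: "\<And>K. compact K \<Longrightarrow> emeasure \<gamma> K < \<infinity>"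
      using rad unfolding radon_measure_def by auto
    have sp: "space \<gamma> = UNIV" using sets_eq_imp_space_eq[OF sets] by simp
    define s where "s n = (if L \<inter> A n = {} then 0 else 1::real)" for n
    have ev: "integral\<^sup>L (gamma_count (L \<inter> A n)) (f k) = complex_of_real (s n)" for n k
    proof (cases "L \<inter> A n = {}")
      case True
      then show ?thesis by (simp add: gamma_count_def s_def)
    next
      case False
      then have cne: "card (L \<inter> A n) \<noteq> 0" using finF[of n] by simp
      have "integral\<^sup>L (gamma_count (L \<inter> A n)) (f k)
          = complex_of_real (1 / real (card (L \<inter> A n)) * real (card (L \<inter> A n)))"
      proof -
        have gc: "gamma_count (L \<inter> A n) = diff_dirac_sum (1 / real (card (L \<inter> A n))) (L \<inter> A n)"
          using False by (simp add: gamma_count_def)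
        show ?thesis unfolding gc f_def
          by (rule test_eval[OF finF _ _ disc]) (use gsP[of k] in auto)
      qed
      then show ?thesis using False cne by (simp add: s_def)
    qed
    have sconv: "s \<longlonglongrightarrow> measure \<gamma> {0}"
    proof (rule key[OF rad])
      fix k
      have "(\<lambda>n. integral\<^sup>L (gamma_count (L \<inter> A n)) (f k)) \<longlonglongrightarrow> integral\<^sup>L \<gamma> (f k)"
        using vc[unfolded vague_converges_def, rule_format, OF adm[of k]] .
      then show "(\<lambda>n. complex_of_real (s n)) \<longlonglongrightarrow> integral\<^sup>L \<gamma> (f k)"
        unfolding ev .
    qed
    define P where "P = (\<exists>N. \<forall>n>N. L \<inter> A n \<noteq> {})"
    have P1: "measure \<gamma> {0} = 1" if P
    proof -
      obtain N where N: "\<forall>n>N. L \<inter> A n \<noteq> {}" using \<open>P\<close> unfolding P_def by blast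
      have "eventually (\<lambda>n. s n = 1) sequentially"
        unfolding eventually_sequentially using N by (intro exI[of _ "Suc N"]) (auto simp: s_def)
      then have "s \<longlonglongrightarrow> 1" by (rule tendsto_eventually)
      then show ?thesis using LIMSEQ_unique sconv by blast
    qed
    have P0: "measure \<gamma> {0} = 0 \<and> (\<exists>M. \<forall>n\<ge>M. L \<inter> A n = {})" if "\<not> P"
    proof -
      have fr: "\<forall>N. \<exists>n>N. L \<inter> A n = {}" using \<open>\<not> P\<close> unfolding P_def by blast
      obtain M where M: "\<And>n. n \<ge> M \<Longrightarrow> norm (s n - measure \<gamma> {0}) < 1/2"
        using LIMSEQ_D[OF sconv, of "1/2"] by auto
      obtain n0 where n0: "n0 > M" "L \<inter> A n0 = {}" using fr by blast
      have "norm (s n0 - measure \<gamma> {0}) < 1/2" using M n0 by simp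
      then have m0: "\<bar>measure \<gamma> {0}\<bar> < 1/2" using n0 by (simp add: s_def)
      have emp: "\<forall>n\<ge>M. L \<inter> A n = {}"
      proof (intro allI impI)
        fix n assume "n \<ge> M"
        then have "norm (s n - measure \<gamma> {0}) < 1/2" by (rule M)
        then show "L \<inter> A n = {}" using m0 by (auto simp: s_def split: if_splits)
      qed
      have "eventually (\<lambda>n. s n = 0) sequentially"
        unfolding eventually_sequentially using emp by (auto simp: s_def)
      then have "s \<longlonglongrightarrow> 0" by (rule tendsto_eventually)
      then have "measure \<gamma> {0} = 0" using LIMSEQ_unique sconv by blast
      then show ?thesis using emp by blast
    qed
    have i: "measure \<gamma> {0} = 1 \<longleftrightarrow> P" using P1 P0 by force
    have ii: "(\<exists>r::nat \<Rightarrow> nat. strict_mono r \<and> (\<forall>k. L \<inter> A (r k) \<noteq> {})) \<longleftrightarrow> P"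
    proof
      assume "\<exists>r::nat \<Rightarrow> nat. strict_mono r \<and> (\<forall>k. L \<inter> A (r k) \<noteq> {})"
      then obtain r :: "nat \<Rightarrow> nat" where r: "strict_mono r" "\<forall>k. L \<inter> A (r k) \<noteq> {}" by blast
      show P
      proof (rule ccontr)
        assume "\<not> P"
        then obtain M where "\<forall>n\<ge>M. L \<inter> A n = {}" using P0 by blast
        moreover have "M \<le> r M" using seq_suble[OF r(1)] .
        ultimately show False using r(2) by blast
      qed
    next
      assume P
      then obtain N where N: "\<forall>n>N. L \<inter> A n \<noteq> {}" unfolding P_def by blast
      have "strict_mono (\<lambda>k. k + Suc N)" by (rule strict_monoI) simp
      moreover have "\<forall>k. L \<inter> A (k + Suc N) \<noteq> {}" using N by simp
      ultimately show "\<exists>r::nat \<Rightarrow> nat. strict_mono r \<and> (\<forall>k. L \<inter> A (r k) \<noteq> {})" by blast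
    qed
    have iv: "P \<longleftrightarrow> (\<exists>S\<in>sets borel. emeasure \<gamma> S \<noteq> 0)"
    proof
      assume P
      then have "measure \<gamma> {0} = 1" by (rule P1)
      then have "emeasure \<gamma> {0} \<noteq> 0" by (auto simp: measure_def)
      moreover have "{0} \<in> sets (borel :: 'a measure)" by simp
      ultimately show "\<exists>S\<in>sets borel. emeasure \<gamma> S \<noteq> 0" by blast
    next
      assume ex: "\<exists>S\<in>sets borel. emeasure \<gamma> S \<noteq> 0"
      show P
      proof (rule ccontr)
        assume "\<not> P"
        then obtain M where M: "\<forall>n\<ge>M. L \<inter> A n = {}" using P0 by blast
        have zero: "integral\<^sup>L \<gamma> h = 0"
          if h: "continuous_on UNIV h \<and> compact (closure {x. h x \<noteq> 0})" for h :: "'a \<Rightarrow> complex"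
        proof -
          have l1: "(\<lambda>n. integral\<^sup>L (gamma_count (L \<inter> A n)) h) \<longlonglongrightarrow> integral\<^sup>L \<gamma> h"
            using vc[unfolded vague_converges_def, rule_format, OF h] .
          have "eventually (\<lambda>n. integral\<^sup>L (gamma_count (L \<inter> A n)) h = 0) sequentially"
            unfolding eventually_sequentially using M by (auto simp: gamma_count_def)
          then have "(\<lambda>n. integral\<^sup>L (gamma_count (L \<inter> A n)) h) \<longlonglongrightarrow> 0" by (rule tendsto_eventually)
          then show ?thesis using LIMSEQ_unique l1 by blast
        qed
        have Kz: "emeasure \<gamma> K = 0" if K: "compact K" for K
        proof -
          obtain g :: "'a \<Rightarrow> real" where g: "continuous_on UNIV g" "\<forall>x. 0 \<le> g x \<and> g x \<le> 1" "\<forall>x\<in>K. g x = 1"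
              "compact (closure {x. g x \<noteq> 0})"
            using urysohn_cc[OF lc K open_UNIV] by blast
          define C where "C = closure {x. g x \<noteq> 0}"
          have "integral\<^sup>L \<gamma> (\<lambda>x. complex_of_real (g x)) = 0"
            by (rule zero) (use g in simp)
          then have g0: "integral\<^sup>L \<gamma> g = 0" by simp
          have Cb: "C \<in> sets \<gamma>" unfolding C_def sets by simp
          have intC: "integrable \<gamma> (indicator C :: 'a \<Rightarrow> real)"
            using Cb finc[of C] g(4) by (simp add: integrable_indicator_iff sp C_def)
          have gm: "g \<in> borel_measurable \<gamma>"
            unfolding measurable_cong_sets[OF sets refl] by (rule borel_measurable_continuous_onI[OF g(1)])
          have bnd: "norm (g x) \<le> norm (indicator C x :: real)" for x
          proof (cases "g x = 0")
            case False
            then have "x \<in> C" unfolding C_def by (intro closure_subset[THEN subsetD]) simp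
            moreover have "\<bar>g x\<bar> \<le> 1" using g(2)[rule_format, of x] by (simp add: abs_if)
            ultimately show ?thesis by simp
          qed simp
          have intg: "integrable \<gamma> g"
            by (rule Bochner_Integration.integrable_bound[OF intC gm], rule AE_I2, rule bnd)
          have Kb: "K \<in> sets \<gamma>" using K sets by (simp add: compact_imp_closed borel_closed)
          have intK: "integrable \<gamma> (indicator K :: 'a \<Rightarrow> real)"
            using Kb finc[OF K] by (simp add: integrable_indicator_iff sp)
          have "measure \<gamma> K = integral\<^sup>L \<gamma> (indicator K :: 'a \<Rightarrow> real)" by (simp add: sp)
          also have "\<dots> \<le> integral\<^sup>L \<gamma> g"
            by (rule integral_mono[OF intK intg]) (use g in \<open>auto simp: indicator_def\<close>)
          finally have "measure \<gamma> K \<le> 0" using g0 by simp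
          then have "measure \<gamma> K = 0" using measure_nonneg[of \<gamma> K] by linarith
          then show ?thesis using finc[OF K] by (simp add: emeasure_eq_ennreal_measure)
        qed
        obtain CC :: "'a set set" where CC: "countable CC" "\<Union>CC = UNIV" "\<forall>c\<in>CC. compact c"
          using sigma_compact_cover[OF lc] by blast
        have "(\<Union>c\<in>CC. c) \<in> null_sets \<gamma>"
        proof (rule null_sets_UN'[OF CC(1)])
          fix c assume "c \<in> CC"
          then have "compact c" using CC(3) by blast
          then show "c \<in> null_sets \<gamma>" using Kz sets by (simp add: null_sets_def compact_imp_closed borel_closed)
        qed
        note nul = this
        have eqU: "(\<Union>c\<in>CC. c) = UNIV" using CC(2) by simp
        have U0: "emeasure \<gamma> UNIV = 0" using null_setsD1[OF nul] unfolding eqU .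
        obtain S where S: "S \<in> sets borel" "emeasure \<gamma> S \<noteq> 0" using ex by blast
        have Utop: "UNIV \<in> sets \<gamma>" using sets.top[of \<gamma>] unfolding sp .
        have "emeasure \<gamma> S \<le> emeasure \<gamma> UNIV"
          by (rule emeasure_mono[OF _ Utop]) simp
        then show False using U0 S(2) by simp
      qed
    qed
    show ?thesis using i ii iv unfolding P_def by blast
  qed
  show ?thesis using partA partB by blast
qed


end
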